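(* For each $a\in A\setminus\{a^*\}$ and $\ell\in\mathbb{R}$: (1) $I_{a^*,a}(\ell)-I_{a,a}(\ell)=-\ell$; (2) $I_{a^*,a}(\ell)\ge I_{a^*,a}(\hat L_a(a))$ whenever $\ell\le\hat L_a(a)$.
   Context: Finite action set $A$, $a^*\in A$. A measurable space $Z$ with $\sigma$-finite measure $\nu$; for each $n$ and $a\in A$, a probability measure $\mu^n_a$ on $Z$ with density $g^n_a$ w.r.t. $\nu$. For $a'\neq a^*$, $L_n(a')=\frac1n\log\frac{g^n_{a^*}(z)}{g^n_{a'}(z)}$, well-defined $\mu^n_a$-a.s. for all $a\in A$; $\mathbb{P}_a$ is probability under $\mu^n_a$. For each $a\in A$, $a'\neq a^*$, $I_{a,a'}:\mathbb{R}\to[0,\infty]$ is a rate function: for all measurable $B\subseteq\mathbb{R}$, $-\inf_{\mathrm{int}B}I_{a,a'}\le\liminf_n\frac1n\log\mathbb{P}_a[L_n(a')\in B]\le\limsup_n\frac1n\log\mathbb{P}_a[L_n(a')\in B]\le-\inf_{\mathrm{cl}B}I_{a,a'}$. Each $I_{a,a'}$ has a unique minimizer $\hat L_a(a')$, with $\hat L_a(a')\neq\hat L_{\tilde a}(a')$ for $a\neq\tilde a$, and compact level sets; $I_{a^*,a'}$ is continuous at $\hat L_{a'}(a')$ and $\hat L_{a^*}(a')$. *)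

theory Defs
  imports "HOL-Probability.Probability"
begin

definition llr :: "(nat \<Rightarrow> 'a \<Rightarrow> 'z \<Rightarrow> real) \<Rightarrow> 'a \<Rightarrow> nat \<Rightarrow> 'a \<Rightarrow> 'z \<Rightarrow> real" where
  "llr g astar n a' z = ln (g n astar z / g n a' z) / real n"

definition mu :: "'z measure \<Rightarrow> (nat \<Rightarrow> 'a \<Rightarrow> 'z \<Rightarrow> real) \<Rightarrow> nat \<Rightarrow> 'a \<Rightarrow> 'z measure" where
  "mu nu g n a = density nu (\<lambda>z. ennreal (g n a z))"

definition scaled_log :: "nat \<Rightarrow> real \<Rightarrow> ereal" where
  "scaled_log n p = (if p = 0 then -\<infinity> else ereal (ln p / real n))"

end

theory Submission
  imports Defs
begin

lemma dens_cmp: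
  fixes nu :: "'z measure" and f h :: "'z \<Rightarrow> real"
  assumes fm: "f \<in> borel_measurable nu" and hm: "h \<in> borel_measurable nu" and E: "E \<in> sets nu"
    and ae: "AE z in nu. 0 < f z \<longrightarrow> (0 < h z \<and> 0 < f z)"
    and pw: "\<And>z. z \<in> E \<Longrightarrow> 0 < f z \<Longrightarrow> 0 < h z \<Longrightarrow> c * f z \<le> h z"
    and c: "c \<ge> 0"
  shows "ennreal c * emeasure (density nu (\<lambda>z. ennreal (f z))) E
       \<le> emeasure (density nu (\<lambda>z. ennreal (h z))) E"
proof -
  have "ennreal c * emeasure (density nu (\<lambda>z. ennreal (f z))) E
      = ennreal c * (\<integral>\<^sup>+ x. ennreal (f x) * indicator E x \<partial>nu)"
    using fm E by (simp add: emeasure_density)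
  also have "\<dots> = (\<integral>\<^sup>+ x. ennreal c * (ennreal (f x) * indicator E x) \<partial>nu)"
    using fm E by (simp add: nn_integral_cmult)
  also have "\<dots> \<le> (\<integral>\<^sup>+ x. ennreal (h x) * indicator E x \<partial>nu)"
  proof (rule nn_integral_mono_AE)
    show "AE x in nu. ennreal c * (ennreal (f x) * indicator E x) \<le> ennreal (h x) * indicator E x"
      using ae
    proof eventually_elim
      case (elim x)
      show ?case
      proof (cases "x \<in> E \<and> 0 < f x")
        case True
        then have "c * f x \<le> h x" using pw elim by auto
        then have "ennreal (c * f x) \<le> ennreal (h x)" by (rule ennreal_leI)
        then show ?thesis using True c by (simp add: ennreal_mult)
      next
        case False
        then show ?thesis by (auto simp: ennreal_neg)
      qed
    qed
  qed
  also have "\<dots> = emeasure (density nu (\<lambda>z. ennreal (h z))) E"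
    using hm E by (simp add: emeasure_density)
  finally show ?thesis .
qed

lemma meas_cmp:
  fixes nu :: "'z measure" and f h :: "'z \<Rightarrow> real"
  assumes fm: "f \<in> borel_measurable nu" and hm: "h \<in> borel_measurable nu" and E: "E \<in> sets nu"
    and ae: "AE z in nu. 0 < f z \<longrightarrow> (0 < h z \<and> 0 < f z)"
    and pw: "\<And>z. z \<in> E \<Longrightarrow> 0 < f z \<Longrightarrow> 0 < h z \<Longrightarrow> c * f z \<le> h z"
    and c: "c \<ge> 0"
    and fin: "emeasure (density nu (\<lambda>z. ennreal (h z))) E < top"
  shows "c * measure (density nu (\<lambda>z. ennreal (f z))) E
       \<le> measure (density nu (\<lambda>z. ennreal (h z))) E"
proof -
  have "c * measure (density nu (\<lambda>z. ennreal (f z))) E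
      = enn2real (ennreal c * emeasure (density nu (\<lambda>z. ennreal (f z))) E)"
    using c by (simp add: measure_def enn2real_mult)
  also have "\<dots> \<le> measure (density nu (\<lambda>z. ennreal (h z))) E"
    unfolding measure_def by (rule enn2real_mono[OF dens_cmp[OF assms(1-6)] fin])
  finally show ?thesis .
qed

lemma sl_cmp:
  assumes n: "n \<ge> 1" and q: "0 \<le> q" and pq: "exp (real n * c) * q \<le> p"
  shows "ereal c + scaled_log n q \<le> scaled_log n p"
proof (cases "q = 0")
  case True then show ?thesis by (simp add: scaled_log_def)
next
  case False
  then have qp: "q > 0" using q by simp
  then have pp: "p > 0" using pq by (smt (verit) exp_gt_zero mult_pos_pos)
  have "ln (exp (real n * c) * q) \<le> ln p" using pq qp pp by simp
  then have "real n * c + ln q \<le> ln p" using qp by (simp add: ln_mult)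
  have np: "real n > 0" using n by simp
  have "c + ln q / real n = (real n * c + ln q) / real n" using np by (simp add: field_simps)
  also have "\<dots> \<le> ln p / real n" using np \<open>real n * c + ln q \<le> ln p\<close> by (simp add: divide_right_mono)
  finally have "c + ln q / real n \<le> ln p / real n" .
  then show ?thesis using qp pp by (simp add: scaled_log_def)
qed

lemma lsc_lemma:
  fixes J :: "real \<Rightarrow> ereal"
  assumes cl: "\<And>c. closed {x. J x \<le> ereal c}"
    and inf: "\<And>d. d > 0 \<Longrightarrow> (INF x\<in>{l-d..l+d}. J x) \<le> K + ereal d"
  shows "J l \<le> K"
proof (rule ccontr)
  assume "\<not> J l \<le> K"
  then have "K < J l" by simp
  then obtain c where Kc: "K < ereal c" and cJ: "ereal c < J l" using ereal_dense2 by blast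
  have "open (- {x. J x \<le> ereal c})" using cl by auto
  moreover have "l \<in> - {x. J x \<le> ereal c}" using cJ by auto
  ultimately obtain r where r: "r > 0" "\<And>y. dist y l < r \<Longrightarrow> y \<in> - {x. J x \<le> ereal c}"
    unfolding open_dist by (metis dist_commute)
  obtain d where d: "d > 0" "d < r" "K + ereal d < ereal c"
  proof (cases K)
    case (real k)
    define d where "d = min (r/2) ((c - k)/2)"
    have "d > 0" "d < r" "k + d < c" using r Kc real by (auto simp: d_def min_def field_simps)
    then show ?thesis using that[of d] real by simp
  next
    case PInf then show ?thesis using Kc by simp
  next
    case MInf then show ?thesis using that[of "r/2"] r by auto
  qed
  have "ereal c \<le> (INF x\<in>{l-d..l+d}. J x)"
  proof (rule INF_greatest)
    fix x assume "x \<in> {l-d..l+d}"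
    then have "dist x l < r" using d by (auto simp: dist_real_def)
    then show "ereal c \<le> J x" using r(2) by fastforce
  qed
  also have "\<dots> \<le> K + ereal d" using inf d by simp
  finally show False using d by simp
qed

theorem lemma4:
  fixes A :: "'a set" and astar :: 'a
    and nu :: "'z measure"
    and g :: "nat \<Rightarrow> 'a \<Rightarrow> 'z \<Rightarrow> real"
    and I :: "'a \<Rightarrow> 'a \<Rightarrow> real \<Rightarrow> ereal"
    and Lhat :: "'a \<Rightarrow> 'a \<Rightarrow> real" and a :: 'a and l :: real
  assumes finA: "finite A" and astarA: "astar \<in> A"
    and sf: "sigma_finite_measure nu"
    and g_meas: "\<And>n a. a \<in> A \<Longrightarrow> g n a \<in> borel_measurable nu"
    and g_nonneg: "\<And>n a z. a \<in> A \<Longrightarrow> z \<in> space nu \<Longrightarrow> g n a z \<ge> 0"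
    and prob: "\<And>n a. a \<in> A \<Longrightarrow> prob_space (mu nu g n a)"
    and welldef: "\<And>n a a'. a \<in> A \<Longrightarrow> a' \<in> A - {astar} \<Longrightarrow>
        AE z in mu nu g n a. g n astar z > 0 \<and> g n a' z > 0"
    and I_nonneg: "\<And>a a' x. a \<in> A \<Longrightarrow> a' \<in> A - {astar} \<Longrightarrow> I a a' x \<ge> 0"
    and LDP_lower: "\<And>a a' B. a \<in> A \<Longrightarrow> a' \<in> A - {astar} \<Longrightarrow> B \<in> sets borel \<Longrightarrow>
        - (INF x\<in>interior B. I a a' x) \<le>
          liminf (\<lambda>n. scaled_log n (measure (mu nu g n a) {z \<in> space nu. llr g astar n a' z \<in> B}))"
    and LDP_upper: "\<And>a a' B. a \<in> A \<Longrightarrow> a' \<in> A - {astar} \<Longrightarrow> B \<in> sets borel \<Longrightarrow>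
        limsup (\<lambda>n. scaled_log n (measure (mu nu g n a) {z \<in> space nu. llr g astar n a' z \<in> B}))
          \<le> - (INF x\<in>closure B. I a a' x)"
    and Lhat_min: "\<And>a a' y. a \<in> A \<Longrightarrow> a' \<in> A - {astar} \<Longrightarrow> I a a' (Lhat a a') \<le> I a a' y"
    and Lhat_unique: "\<And>a a' x. a \<in> A \<Longrightarrow> a' \<in> A - {astar} \<Longrightarrow>
        (\<forall>y. I a a' x \<le> I a a' y) \<Longrightarrow> x = Lhat a a'"
    and Lhat_distinct: "\<And>a b a'. a \<in> A \<Longrightarrow> b \<in> A \<Longrightarrow> a \<noteq> b \<Longrightarrow> a' \<in> A - {astar} \<Longrightarrow>
        Lhat a a' \<noteq> Lhat b a'"
    and level_compact: "\<And>a a' c. a \<in> A \<Longrightarrow> a' \<in> A - {astar} \<Longrightarrow>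
        compact {x. I a a' x \<le> ereal c}"
    and cont1: "\<And>a'. a' \<in> A - {astar} \<Longrightarrow> isCont (I astar a') (Lhat a' a')"
    and cont2: "\<And>a'. a' \<in> A - {astar} \<Longrightarrow> isCont (I astar a') (Lhat astar a')"
    and aA: "a \<in> A - {astar}"
  shows "I astar a l = I a a l - ereal l \<and> (l \<le> Lhat a a \<longrightarrow> I astar a l \<ge> I astar a (Lhat a a))"
proof -
  have aA': "a \<in> A" and ane: "a \<noteq> astar" using aA by auto
  have llr_meas: "\<And>n. llr g astar n a \<in> borel_measurable nu"
    unfolding llr_def[abs_def] using g_meas[OF astarA] g_meas[OF aA'] by measurable
  define E where "E = (\<lambda>n (l::real) (d::real). {z \<in> space nu. llr g astar n a z \<in> {l-d..l+d}})"
  have Emeas: "E n l d \<in> sets nu" for n l d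
  proof -
    have "E n l d = llr g astar n a -` {l-d..l+d} \<inter> space nu" by (auto simp: E_def)
    also have "\<dots> \<in> sets nu" by (rule measurable_sets[OF llr_meas]) simp
    finally show ?thesis .
  qed
  have gm: "(\<lambda>z. ennreal (g n b z)) \<in> borel_measurable nu" if "b \<in> A" for n b
    using g_meas[OF that] by measurable
  have aeA: "AE z in nu. 0 < g n a z \<longrightarrow> (0 < g n astar z \<and> 0 < g n a z)" for n
    using welldef[OF aA' aA] unfolding mu_def AE_density[OF gm[OF aA']] by simp
  have aeS: "AE z in nu. 0 < g n astar z \<longrightarrow> (0 < g n a z \<and> 0 < g n astar z)" for n
    using welldef[OF astarA aA] unfolding mu_def AE_density[OF gm[OF astarA]] by auto
  have finm: "emeasure (mu nu g n b) S < top" if "b \<in> A" for n b S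
    using prob_space.emeasure_le_1[OF prob[OF that]] by (metis ennreal_one_less_top order_le_less_trans)
  define sa where "sa = (\<lambda>l d n. scaled_log n (measure (mu nu g n a) (E n l d)))"
  define ss where "ss = (\<lambda>l d n. scaled_log n (measure (mu nu g n astar) (E n l d)))"
  have sl1: "ereal (l-d) + sa l d n \<le> ss l d n" if n: "n \<ge> 1" for l d n
  proof -
    have "exp (real n * (l-d)) * measure (mu nu g n a) (E n l d) \<le> measure (mu nu g n astar) (E n l d)"
      unfolding mu_def
    proof (rule meas_cmp[OF g_meas[OF aA'] g_meas[OF astarA] Emeas aeA])
      fix z assume z: "z \<in> E n l d" and f: "0 < g n a z" and h: "0 < g n astar z"
      have np: "real n > 0" using n by simp
      have "l - d \<le> ln (g n astar z / g n a z) / real n" using z by (auto simp: E_def llr_def)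
      then have "real n * (l-d) \<le> ln (g n astar z / g n a z)" using np by (simp add: field_simps)
      then have "exp (real n * (l-d)) \<le> g n astar z / g n a z"
        using f h by (metis divide_pos_pos exp_le_cancel_iff exp_ln)
      then show "exp (real n * (l-d)) * g n a z \<le> g n astar z" using f by (simp add: field_simps)
    next
      show "emeasure (density nu (\<lambda>z. ennreal (g n astar z))) (E n l d) < top"
        using finm[OF astarA] unfolding mu_def by blast
    qed simp
    then show ?thesis unfolding sa_def ss_def
      by (intro sl_cmp n) (simp_all add: measure_nonneg)
  qed
  have sl2: "ereal (-(l+d)) + ss l d n \<le> sa l d n" if n: "n \<ge> 1" for l d n
  proof -
    have "exp (real n * (-(l+d))) * measure (mu nu g n astar) (E n l d) \<le> measure (mu nu g n a) (E n l d)"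
      unfolding mu_def
    proof (rule meas_cmp[OF g_meas[OF astarA] g_meas[OF aA'] Emeas aeS])
      fix z assume z: "z \<in> E n l d" and f: "0 < g n astar z" and h: "0 < g n a z"
      have np: "real n > 0" using n by simp
      have "ln (g n astar z / g n a z) / real n \<le> l + d" using z by (auto simp: E_def llr_def)
      then have "ln (g n astar z / g n a z) \<le> real n * (l+d)" using np by (simp add: field_simps)
      then have "g n astar z / g n a z \<le> exp (real n * (l+d))"
        using f h by (metis divide_pos_pos exp_le_cancel_iff exp_ln)
      then have "g n astar z \<le> exp (real n * (l+d)) * g n a z" using h by (simp add: field_simps)
      then have "exp (real n * (-(l+d))) * g n astar z \<le> exp (real n * (-(l+d))) * (exp (real n * (l+d)) * g n a z)"
        by (simp add: mult_left_mono)
      also have "\<dots> = (exp (real n * (-(l+d))) * exp (real n * (l+d))) * g n a z" by (simp add: mult.assoc)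
      also have "\<dots> = g n a z" by (simp flip: exp_add add: algebra_simps)
      finally show "exp (real n * (-(l+d))) * g n astar z \<le> g n a z" .
    next
      show "emeasure (density nu (\<lambda>z. ennreal (g n a z))) (E n l d) < top"
        using finm[OF aA'] unfolding mu_def by blast
    qed simp
    then show ?thesis unfolding sa_def ss_def
      by (intro sl_cmp n) (simp_all add: measure_nonneg)
  qed
  have bor: "{l-d..l+d} \<in> sets borel" for l d :: real by simp
  have Ebound: "{z \<in> space nu. llr g astar n a z \<in> {l-d..l+d}} = E n l d" for n l d
    by (simp add: E_def)
  have LL: "- I b a l \<le> liminf (\<lambda>n. scaled_log n (measure (mu nu g n b) (E n l d)))"
    if b: "b \<in> A" and d: "d > 0" for b l d
  proof -
    have "(INF x\<in>{l-d<..<l+d}. I b a x) \<le> I b a l" using d by (intro INF_lower) auto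
    then have "- I b a l \<le> - (INF x\<in>interior {l-d..l+d}. I b a x)" by simp
    also have "\<dots> \<le> liminf (\<lambda>n. scaled_log n (measure (mu nu g n b) (E n l d)))"
      using LDP_lower[OF b aA bor] unfolding Ebound .
    finally show ?thesis .
  qed
  have LU: "limsup (\<lambda>n. scaled_log n (measure (mu nu g n b) (E n l d))) \<le> - (INF x\<in>{l-d..l+d}. I b a x)"
    if b: "b \<in> A" for b l d
    using LDP_upper[OF b aA bor] unfolding Ebound by simp
  have cl: "closed {x. I b a x \<le> ereal c}" if "b \<in> A" for b c
    using level_compact[OF that aA] by (rule compact_imp_closed)
  have main: "I astar a l = I a a l - ereal l" for l
  proof (rule antisym)
    show "I astar a l \<le> I a a l - ereal l"
    proof (rule lsc_lemma[OF cl[OF astarA]])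
      fix d :: real assume d: "d > 0"
      have "ereal (l-d) + - I a a l \<le> ereal (l-d) + liminf (sa l d)"
        using LL[OF aA' d] unfolding sa_def by (intro add_left_mono) simp
      also have "\<dots> = liminf (\<lambda>n. ereal (l-d) + sa l d n)"
        by (rule Liminf_add_ereal_left[symmetric]) simp_all
      also have "\<dots> \<le> liminf (ss l d)"
        by (intro Liminf_mono eventually_mono[OF eventually_ge_at_top[of 1]] sl1)
      also have "\<dots> \<le> limsup (ss l d)" by (rule Liminf_le_Limsup) simp
      also have "\<dots> \<le> - (INF x\<in>{l-d..l+d}. I astar a x)"
        using LU[OF astarA] unfolding ss_def .
      finally have *: "ereal (l-d) + - I a a l \<le> - (INF x\<in>{l-d..l+d}. I astar a x)" .
      show "(INF x\<in>{l-d..l+d}. I astar a x) \<le> I a a l - ereal l + ereal d"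
        using * by (cases "I a a l"; cases "INF x\<in>{l-d..l+d}. I astar a x") auto
    qed
  next
    have "I a a l \<le> I astar a l + ereal l"
    proof (rule lsc_lemma[OF cl[OF aA']])
      fix d :: real assume d: "d > 0"
      have "ereal (-(l+d)) + - I astar a l \<le> ereal (-(l+d)) + liminf (ss l d)"
        using LL[OF astarA d] unfolding ss_def by (intro add_left_mono) simp
      also have "\<dots> = liminf (\<lambda>n. ereal (-(l+d)) + ss l d n)"
        by (rule Liminf_add_ereal_left[symmetric]) simp_all
      also have "\<dots> \<le> liminf (sa l d)"
        by (intro Liminf_mono eventually_mono[OF eventually_ge_at_top[of 1]] sl2)
      also have "\<dots> \<le> limsup (sa l d)" by (rule Liminf_le_Limsup) simp
      also have "\<dots> \<le> - (INF x\<in>{l-d..l+d}. I a a x)"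
        using LU[OF aA'] unfolding sa_def .
      finally have *: "ereal (-(l+d)) + - I astar a l \<le> - (INF x\<in>{l-d..l+d}. I a a x)" .
      show "(INF x\<in>{l-d..l+d}. I a a x) \<le> I astar a l + ereal l + ereal d"
        using * by (cases "I astar a l"; cases "INF x\<in>{l-d..l+d}. I a a x") auto
    qed
    then show "I a a l - ereal l \<le> I astar a l"
      by (cases "I a a l"; cases "I astar a l") auto
  qed
  have "I astar a (Lhat a a) \<le> I astar a l" if "l \<le> Lhat a a"
  proof -
    have "I a a (Lhat a a) \<le> I a a l" by (rule Lhat_min[OF aA' aA])
    then show ?thesis unfolding main using that
      by (cases "I a a l"; cases "I a a (Lhat a a)") auto
  qed
  then show ?thesis using main by auto
qed

end
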